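(* For every $n\in\mathbb N$, $\theta_n(B_n)>c\sqrt n$ with $c=\dfrac{\sqrt[3]{\pi}}{\sqrt{12e}\cdot\sqrt[6]{3}}=0.2135\ldots$. Together with the upper bound $\theta_n(B_n)\le\sqrt{n+1}$, this gives $\theta_n(B_n)\asymp\sqrt n$.
   Context: $B_n$ is the closed unit Euclidean ball in $\mathbb R^n$. For nodes $x^{(1)},\dots,x^{(n+1)}\in B_n$ that are vertices of a nondegenerate simplex, the interpolation projector $P:C(B_n)\to\Pi_1(\mathbb R^n)$ maps $f$ to the unique polynomial $p$ of degree $\le1$ with $p(x^{(j)})=f(x^{(j)})$; $\|P\|_{B_n}$ is its operator norm with respect to the sup norm, and $\theta_n(B_n)$ is the minimum of $\|P\|_{B_n}$ over all such node sets. $L(n)\asymp M(n)$ means $c_1M(n)\le L(n)\le c_2M(n)$ for constants $c_1,c_2>0$ independent of $n$. *)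

theory Defs
  imports "HOL-Analysis.Analysis"
begin

text \<open>Nodes x 0, ..., x n in the unit ball of R^n (n = CARD('n)), indexed by {..CARD('n)}.\<close>

definition admissible_nodes :: "(nat \<Rightarrow> real^'n) \<Rightarrow> bool" where
  "admissible_nodes x \<longleftrightarrow>
     (\<forall>j\<le>CARD('n). x j \<in> cball 0 1) \<and> inj_on x {..CARD('n)} \<and>
     \<not> affine_dependent (x ` {..CARD('n)})"

definition affine_poly :: "(real^'n \<Rightarrow> real) \<Rightarrow> bool" where
  "affine_poly p \<longleftrightarrow> (\<exists>a b. p = (\<lambda>y. a \<bullet> y + b))"

definition interp :: "(nat \<Rightarrow> real^'n) \<Rightarrow> (real^'n \<Rightarrow> real) \<Rightarrow> (real^'n \<Rightarrow> real)" where
  "interp x f = (THE p. affine_poly p \<and> (\<forall>j\<le>CARD('n). p (x j) = f (x j)))"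

text \<open>Operator norm of P on C(B_n) with the sup norm:
  sup over continuous f with sup norm at most 1 of max over B_n of the interpolant.\<close>

definition interp_norm :: "(nat \<Rightarrow> real^'n) \<Rightarrow> real" where
  "interp_norm x = Sup {\<bar>interp x f y\<bar> | f y.
      continuous_on (cball (0::real^'n) 1) f \<and> (\<forall>z\<in>cball 0 1. \<bar>f z\<bar> \<le> 1) \<and> y \<in> cball 0 1}"

definition theta_ball :: "('n::finite) itself \<Rightarrow> real" where
  "theta_ball _ = Inf {interp_norm (x :: nat \<Rightarrow> real^'n) | x. admissible_nodes x}"

end

theory Submission
  imports Defs
begin

lemma adm_facts:
  assumes "admissible_nodes (x :: nat \<Rightarrow> real^'n)"
  shows "inj_on x {..CARD('n)}" "\<not> affine_dependent (x ` {..CARD('n)})"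
    "\<And>j. j \<le> CARD('n) \<Longrightarrow> norm (x j) \<le> 1"
  using assms unfolding admissible_nodes_def by auto

lemma hull_univ:
  assumes "admissible_nodes (x :: nat \<Rightarrow> real^'n)"
  shows "affine hull (x ` {..CARD('n)}) = UNIV"
proof -
  have "card (x ` {..CARD('n)}) = CARD('n) + 1"
    using adm_facts(1)[OF assms] by (simp add: card_image)
  then have "aff_dim (x ` {..CARD('n)}) = int CARD('n)"
    using aff_dim_affine_independent[OF adm_facts(2)[OF assms]] by simp
  then show ?thesis using aff_dim_eq_full by (metis DIM_cart DIM_real mult_1_right)
qed

lemma affine_on_hull:
  fixes a :: "real^'n"
  assumes "finite S" "y \<in> affine hull S" "\<forall>v\<in>S. a \<bullet> v + b = 0"
  shows "a \<bullet> y + b = 0"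
proof -
  obtain u where u: "sum u S = 1" "(\<Sum>v\<in>S. u v *\<^sub>R v) = y"
    using assms(2) affine_hull_finite[OF assms(1)] by auto
  have "a \<bullet> y + b = (\<Sum>v\<in>S. u v * (a \<bullet> v)) + (\<Sum>v\<in>S. u v * b)"
    unfolding u(2)[symmetric] by (simp add: inner_sum_right u(1) sum_distrib_right[symmetric])
  also have "\<dots> = (\<Sum>v\<in>S. u v * (a \<bullet> v + b))"
    by (simp add: sum.distrib distrib_left)
  also have "\<dots> = 0" using assms(3) by simp
  finally show ?thesis .
qed

lemma interp_unique:
  fixes a :: "real^'n"
  assumes "admissible_nodes x" "\<forall>j\<le>CARD('n). a \<bullet> x j + b = a' \<bullet> x j + b'"
  shows "a = a' \<and> b = b'"
proof -
  have "\<forall>y. (a - a') \<bullet> y + (b - b') = 0"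
  proof
    fix y :: "real^'n"
    show "(a - a') \<bullet> y + (b - b') = 0"
      apply (rule affine_on_hull[of "x ` {..CARD('n)}"])
      using hull_univ[OF assms(1)] assms(2) by (auto simp: inner_diff_left)
  qed
  from this[rule_format, of 0] this[rule_format, of "a - a'"] show ?thesis by simp
qed

lemma interp_exists:
  assumes "admissible_nodes (x :: nat \<Rightarrow> real^'n)"
  shows "\<exists>a b. \<forall>j\<le>CARD('n). a \<bullet> x j + b = w j"
proof -
  let ?N = "CARD('n)"
  have inj: "inj_on x {..?N}" and ind: "\<not> affine_dependent (x ` {..?N})"
    using adm_facts[OF assms] by auto
  have "{..?N} = insert 0 {1..?N}" by auto
  then have eq: "x ` {..?N} = insert (x 0) (x ` {1..?N})" by simp
  have nin: "x 0 \<notin> x ` {1..?N}" proof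
    assume "x 0 \<in> x ` {1..?N}"
    then obtain k where "k \<in> {1..?N}" "x 0 = x k" by auto
    with inj show False unfolding inj_on_def by (metis atLeastAtMost_iff atMost_iff le0 not_one_le_zero)
  qed
  define B where "B = (\<lambda>v. - x 0 + v) ` x ` {1..?N}"
  have indB: "\<not> dependent B" using ind unfolding eq B_def affine_dependent_iff_dependent[OF nin] .
  define f where "f v = w (inv_into {1..?N} (\<lambda>j. - x 0 + x j) v) - w 0" for v
  obtain g :: "real^'n \<Rightarrow> real" where g: "linear g" "\<forall>v\<in>B. g v = f v"
    using linear_independent_extend[OF indB] by blast
  have inj2: "inj_on (\<lambda>j. - x 0 + x j) {1..?N}"
    using inj by (auto simp: inj_on_def)
  define a where "a = adjoint g 1"
  have ga: "g v = a \<bullet> v" for v using adjoint_works[OF g(1), of v 1] by (simp add: a_def inner_commute)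
  show ?thesis
  proof (intro exI allI impI)
    fix j assume j: "j \<le> ?N"
    show "a \<bullet> x j + (w 0 - a \<bullet> x 0) = w j"
    proof (cases "j = 0")
      case True then show ?thesis by simp
    next
      case False
      then have j1: "j \<in> {1..?N}" using j by auto
      have "- x 0 + x j \<in> B" using j1 by (auto simp: B_def)
      then have "g (- x 0 + x j) = f (- x 0 + x j)" using g by auto
      also have "\<dots> = w j - w 0" unfolding f_def
        using inv_into_f_f[OF inj2 j1] by simp
      finally show ?thesis unfolding ga by (simp add: inner_add_right inner_diff_right)
    qed
  qed
qed

lemma interp_eq:
  fixes a :: "real^'n"
  assumes "admissible_nodes x" "\<forall>j\<le>CARD('n). a \<bullet> x j + b = f (x j)"
  shows "interp x f = (\<lambda>y. a \<bullet> y + b)"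
  unfolding interp_def
proof (rule the_equality)
  show "affine_poly (\<lambda>y. a \<bullet> y + b) \<and> (\<forall>j\<le>CARD('n). a \<bullet> x j + b = f (x j))"
    using assms(2) by (auto simp: affine_poly_def)
next
  fix p assume p: "affine_poly p \<and> (\<forall>j\<le>CARD('n). p (x j) = f (x j))"
  then obtain a' b' where p': "p = (\<lambda>y. a' \<bullet> y + b')" unfolding affine_poly_def by auto
  have "a' = a \<and> b' = b"
    by (rule interp_unique[OF assms(1)]) (use p p' assms(2) in auto)
  then show "p = (\<lambda>y. a \<bullet> y + b)" using p' by simp
qed

lemma bary_exists:
  assumes "admissible_nodes (x :: nat \<Rightarrow> real^'n)"
  shows "\<exists>A Bc. \<forall>j\<le>CARD('n). \<forall>k\<le>CARD('n). A j \<bullet> x k + Bc j = (if j = k then 1 else 0)"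
proof -
  have "\<forall>j. \<exists>ab. \<forall>k\<le>CARD('n). fst ab \<bullet> x k + snd ab = (if j = k then 1 else 0)"
    using interp_exists[OF assms] by auto
  then obtain ab where "\<forall>j. \<forall>k\<le>CARD('n). fst (ab j) \<bullet> x k + snd (ab j) = (if j = k then 1 else (0::real))"
    by metis
  then show ?thesis by (intro exI[of _ "\<lambda>j. fst (ab j)"] exI[of _ "\<lambda>j. snd (ab j)"]) auto
qed

lemma interp_bary:
  fixes A :: "nat \<Rightarrow> real^'n"
  assumes "admissible_nodes x"
    and AB: "\<forall>j\<le>CARD('n). \<forall>k\<le>CARD('n). A j \<bullet> x k + Bc j = (if j = k then 1 else 0)"
  shows "interp x f = (\<lambda>y. \<Sum>j\<le>CARD('n). f (x j) * (A j \<bullet> y + Bc j))"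
proof -
  have "interp x f = (\<lambda>y. (\<Sum>j\<le>CARD('n). f (x j) *\<^sub>R A j) \<bullet> y + (\<Sum>j\<le>CARD('n). f (x j) * Bc j))"
  proof (rule interp_eq[OF assms(1)], intro allI impI)
    fix k assume k: "k \<le> CARD('n)"
    have "(\<Sum>j\<le>CARD('n). f (x j) *\<^sub>R A j) \<bullet> x k + (\<Sum>j\<le>CARD('n). f (x j) * Bc j)
        = (\<Sum>j\<le>CARD('n). f (x j) * (A j \<bullet> x k + Bc j))"
      by (simp add: inner_sum_left sum.distrib distrib_left)
    also have "\<dots> = (\<Sum>j\<le>CARD('n). if j = k then f (x j) else 0)"
      using AB k by (intro sum.cong) auto
    also have "\<dots> = f (x k)" using k by simp
    finally show "(\<Sum>j\<le>CARD('n). f (x j) *\<^sub>R A j) \<bullet> x k + (\<Sum>j\<le>CARD('n). f (x j) * Bc j) = f (x k)" .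
  qed
  then show ?thesis
    by (simp add: inner_sum_left sum.distrib distrib_left)
qed

lemma interp_set_bdd:
  assumes "admissible_nodes (x :: nat \<Rightarrow> real^'n)"
  shows "bdd_above {\<bar>interp x f y\<bar> | f y.
      continuous_on (cball (0::real^'n) 1) f \<and> (\<forall>z\<in>cball 0 1. \<bar>f z\<bar> \<le> 1) \<and> y \<in> cball 0 1}"
proof -
  obtain A Bc where AB: "\<forall>j\<le>CARD('n). \<forall>k\<le>CARD('n). A j \<bullet> x k + Bc j = (if j = k then 1 else 0)"
    using bary_exists[OF assms] by blast
  show ?thesis
  proof (rule bdd_aboveI, safe)
    fix f :: "real^'n \<Rightarrow> real" and y :: "real^'n"
    assume f: "\<forall>z\<in>cball 0 1. \<bar>f z\<bar> \<le> 1" and y: "y \<in> cball 0 1"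
    have "\<bar>interp x f y\<bar> = \<bar>\<Sum>j\<le>CARD('n). f (x j) * (A j \<bullet> y + Bc j)\<bar>"
      using interp_bary[OF assms AB] by simp
    also have "\<dots> \<le> (\<Sum>j\<le>CARD('n). \<bar>f (x j) * (A j \<bullet> y + Bc j)\<bar>)" by (rule sum_abs)
    also have "\<dots> \<le> (\<Sum>j\<le>CARD('n). norm (A j) + \<bar>Bc j\<bar>)"
    proof (rule sum_mono)
      fix j assume j: "j \<in> {..CARD('n)}"
      have fx: "\<bar>f (x j)\<bar> \<le> 1" using f adm_facts(3)[OF assms, of j] j by auto
      have "\<bar>A j \<bullet> y\<bar> \<le> norm (A j) * norm y" by (rule Cauchy_Schwarz_ineq2)
      also have "\<dots> \<le> norm (A j)" using y by (simp add: mult_left_le)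
      finally have "\<bar>A j \<bullet> y + Bc j\<bar> \<le> norm (A j) + \<bar>Bc j\<bar>" by linarith
      then show "\<bar>f (x j) * (A j \<bullet> y + Bc j)\<bar> \<le> norm (A j) + \<bar>Bc j\<bar>"
        using fx by (simp add: abs_mult) (meson abs_ge_zero abs_ge_zero mult_left_le_one_le order_trans)
    qed
    finally show "\<bar>interp x f y\<bar> \<le> (\<Sum>j\<le>CARD('n). norm (A j) + \<bar>Bc j\<bar>)" .
  qed
qed

lemma greedy_signs:
  fixes A :: "nat \<Rightarrow> 'a::real_inner"
  shows "\<exists>s. (\<forall>j. \<bar>s j\<bar> = (1::real)) \<and> (\<Sum>j<m. (norm (A j))\<^sup>2) \<le> (norm (\<Sum>j<m. s j *\<^sub>R A j))\<^sup>2"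
proof (induction m)
  case 0 show ?case by (intro exI[of _ "\<lambda>_. 1"]) auto
next
  case (Suc m)
  then obtain s where s: "\<forall>j. \<bar>s j\<bar> = (1::real)" "(\<Sum>j<m. (norm (A j))\<^sup>2) \<le> (norm (\<Sum>j<m. s j *\<^sub>R A j))\<^sup>2" by blast
  define v where "v = (\<Sum>j<m. s j *\<^sub>R A j)"
  define t where "t = (if v \<bullet> A m \<ge> 0 then 1 else -1::real)"
  define s' where "s' = s(m := t)"
  have sum_eq: "(\<Sum>j<m. s' j *\<^sub>R A j) = v" unfolding v_def s'_def by (intro sum.cong) auto
  have "(\<Sum>j<Suc m. s' j *\<^sub>R A j) = v + t *\<^sub>R A m" using sum_eq by (simp add: s'_def)
  moreover have "(v + t *\<^sub>R A m) \<bullet> (v + t *\<^sub>R A m) = v \<bullet> v + 2 * t * (v \<bullet> A m) + t\<^sup>2 * (A m \<bullet> A m)"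
    by (simp add: inner_add_left inner_add_right inner_commute algebra_simps power2_eq_square)
  ultimately have "(norm (\<Sum>j<Suc m. s' j *\<^sub>R A j))\<^sup>2 = (norm v)\<^sup>2 + 2 * t * (v \<bullet> A m) + t\<^sup>2 * (norm (A m))\<^sup>2"
    by (simp only: power2_norm_eq_inner)
  moreover have "t * (v \<bullet> A m) \<ge> 0" "t\<^sup>2 = 1" unfolding t_def by auto
  ultimately have "(norm (\<Sum>j<Suc m. s' j *\<^sub>R A j))\<^sup>2 \<ge> (norm v)\<^sup>2 + (norm (A m))\<^sup>2" by simp
  moreover have "\<forall>j. \<bar>s' j\<bar> = 1" using s(1) unfolding s'_def t_def by auto
  ultimately show ?case using s(2) unfolding v_def by (intro exI[of _ s']) auto
qed

lemma lower_one:
  assumes "admissible_nodes (x :: nat \<Rightarrow> real^'n)"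
  shows "sqrt (real CARD('n) + 1) / 2 \<le> interp_norm x"
proof -
  let ?N = "CARD('n)"
  obtain A Bc where AB: "\<forall>j\<le>?N. \<forall>k\<le>?N. A j \<bullet> x k + Bc j = (if j = k then 1 else 0)"
    using bary_exists[OF assms] by blast
  have Anorm: "norm (A j) \<ge> 1/2" if j: "j \<le> ?N" for j
  proof -
    define k where "k = (if j = 0 then 1 else 0::nat)"
    have k: "k \<le> ?N" "k \<noteq> j" unfolding k_def using j by auto
    have eq1: "A j \<bullet> (x j - x k) = 1" proof -
      have "A j \<bullet> x j + Bc j = 1" "A j \<bullet> x k + Bc j = 0" using AB j k by auto
      then show ?thesis by (simp add: inner_diff_right)
    qed
    have "1 = \<bar>A j \<bullet> (x j - x k)\<bar>" using eq1 by simp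
    also have "\<dots> \<le> norm (A j) * norm (x j - x k)" by (rule Cauchy_Schwarz_ineq2)
    also have "\<dots> \<le> norm (A j) * 2"
    proof -
      have "norm (x j - x k) \<le> norm (x j) + norm (x k)" by (rule norm_triangle_ineq4)
      also have "\<dots> \<le> 2" using adm_facts(3)[OF assms, of j] adm_facts(3)[OF assms, of k] j k by linarith
      finally show ?thesis by (simp add: mult_left_mono)
    qed
    finally show ?thesis by simp
  qed
  obtain s where s: "\<forall>j. \<bar>s j\<bar> = (1::real)"
    "(\<Sum>j<Suc ?N. (norm (A j))\<^sup>2) \<le> (norm (\<Sum>j<Suc ?N. s j *\<^sub>R A j))\<^sup>2"
    using greedy_signs by blast
  define v where "v = (\<Sum>j\<le>?N. s j *\<^sub>R A j)"
  define bb where "bb = (\<Sum>j\<le>?N. s j * Bc j)"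
  have "(\<Sum>j<Suc ?N. (1/2::real)\<^sup>2) \<le> (\<Sum>j<Suc ?N. (norm (A j))\<^sup>2)"
    by (intro sum_mono power_mono) (use Anorm in auto)
  with s(2) have "(real ?N + 1) / 4 \<le> (norm v)\<^sup>2"
    unfolding v_def lessThan_Suc_atMost by (simp add: power2_eq_square)
  then have vbig: "sqrt (real ?N + 1) / 2 \<le> norm v"
    by (metis real_le_rsqrt real_sqrt_divide real_sqrt_four norm_ge_zero real_sqrt_le_iff real_sqrt_unique zero_le_numeral)
  have vnz: "v \<noteq> 0" using vbig by (auto simp: add_nonneg_eq_0_iff) 
  define p where "p = (\<lambda>y. v \<bullet> y + bb)"
  define f where "f = (\<lambda>z. max (-1) (min 1 (p z)))"
  have pxk: "p (x k) = s k" if "k \<le> ?N" for k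
  proof -
    have "p (x k) = (\<Sum>j\<le>?N. s j * (A j \<bullet> x k + Bc j))"
      by (simp add: p_def v_def bb_def inner_sum_left sum.distrib distrib_left)
    also have "\<dots> = (\<Sum>j\<le>?N. if j = k then s j else 0)" using AB that by (intro sum.cong) auto
    finally show ?thesis using that by simp
  qed
  have fxk: "f (x k) = s k" if "k \<le> ?N" for k
    using pxk[OF that] s(1)[rule_format, of k] unfolding f_def by (auto simp: abs_if split: if_splits)
  have ip: "interp x f = p" unfolding p_def
    by (rule interp_eq[OF assms]) (use pxk fxk in \<open>auto simp: p_def\<close>)
  have fcont: "continuous_on (cball 0 1) f" unfolding f_def p_def by (intro continuous_intros)
  have fb: "\<forall>z\<in>cball 0 1. \<bar>f z\<bar> \<le> 1" unfolding f_def by auto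
  define y where "y = v /\<^sub>R norm v"
  have y1: "y \<in> cball 0 1" "- y \<in> cball 0 1" using vnz by (auto simp: y_def)
  have "p y - p (- y) = 2 * norm v" using vnz
    by (simp add: p_def y_def inner_minus_right power2_norm_eq_inner[symmetric] power2_eq_square)
  then have "norm v \<le> \<bar>p y\<bar> \<or> norm v \<le> \<bar>p (- y)\<bar>" by linarith
  then obtain y' where y': "y' \<in> cball 0 1" "norm v \<le> \<bar>p y'\<bar>" using y1 by blast
  have "\<bar>interp x f y'\<bar> \<le> interp_norm x" unfolding interp_norm_def
    by (rule cSup_upper[OF _ interp_set_bdd[OF assms]]) (use fcont fb y' in blast)
  then show ?thesis using vbig y' ip by simp
qed

lemma bary_admissible:
  fixes x :: "nat \<Rightarrow> real^'n" and A :: "nat \<Rightarrow> real^'n"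
  assumes nx: "\<forall>j\<le>CARD('n). norm (x j) \<le> 1"
    and AB: "\<forall>j\<le>CARD('n). \<forall>k\<le>CARD('n). A j \<bullet> x k + Bc j = (if j = k then 1 else 0)"
  shows "admissible_nodes x"
proof -
  let ?N = "CARD('n)"
  have inj: "inj_on x {..?N}"
  proof (rule inj_onI)
    fix j k assume jk: "j \<in> {..?N}" "k \<in> {..?N}" "x j = x k"
    have "A j \<bullet> x j + Bc j = 1" "A j \<bullet> x k + Bc j = (if j = k then 1 else 0)" using AB jk(1,2) by auto
    then show "j = k" using jk(3) by (metis zero_neq_one)
  qed
  have nd: "\<not> affine_dependent (x ` {..?N})"
  proof
    assume "affine_dependent (x ` {..?N})"
    then obtain U where U: "sum U (x ` {..?N}) = 0" "\<exists>v\<in>x ` {..?N}. U v \<noteq> 0"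
        "(\<Sum>v\<in>x ` {..?N}. U v *\<^sub>R v) = 0"
      using affine_dependent_explicit_finite[of "x ` {..?N}"] by auto
    then obtain k where k: "k \<le> ?N" "U (x k) \<noteq> 0" by auto
    have val: "A k \<bullet> w + Bc k = (if w = x k then 1 else 0)" if w_in: "w \<in> x ` {..?N}" for w
    proof -
      obtain m where m: "m \<le> ?N" "w = x m" using w_in by (auto simp only: image_iff atMost_iff)
      have e: "A k \<bullet> x m + Bc k = (if k = m then 1 else 0)" using AB k(1) m(1) by blast
      show ?thesis
      proof (cases "k = m")
        case True then show ?thesis using e m by simp
      next
        case False
        have "w \<noteq> x k" using inj k(1) m False unfolding inj_on_def by force
        then show ?thesis using e m False by simp
      qed
    qed
    have "0 = A k \<bullet> (\<Sum>v\<in>x ` {..?N}. U v *\<^sub>R v) + Bc k * sum U (x ` {..?N})"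
      using U by simp
    also have "\<dots> = (\<Sum>w\<in>x ` {..?N}. U w * (A k \<bullet> w + Bc k))"
      by (simp add: inner_sum_right sum_distrib_left sum.distrib distrib_left mult.commute[of "Bc k"])
    also have "\<dots> = (\<Sum>w\<in>x ` {..?N}. if w = x k then U w else 0)"
      by (intro sum.cong refl) (simp add: val)
    also have "\<dots> = U (x k)" using k by (simp add: sum.delta)
    finally show False using k by simp
  qed
  show ?thesis unfolding admissible_nodes_def using nx inj nd by auto
qed

lemma regular_simplex:
  "\<exists>(u :: nat \<Rightarrow> real^'n). (\<forall>j\<le>CARD('n). \<forall>k\<le>CARD('n).
       u j \<bullet> u k = (if j = k then 1 else - 1 / real CARD('n)))
     \<and> (\<forall>y. (\<Sum>j\<le>CARD('n). u j \<bullet> y) = 0)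
     \<and> (\<forall>y. (\<Sum>j\<le>CARD('n). (u j \<bullet> y)\<^sup>2) = (real CARD('n) + 1) / real CARD('n) * (norm y)\<^sup>2)"
proof -
  let ?N = "CARD('n)"
  define N where "N = real ?N"
  have Npos: "N > 0" unfolding N_def by simp
  obtain h where h: "bij_betw h {1..?N} (UNIV :: 'n set)"
    using ex_bij_betw_nat_finite_1[of "UNIV :: 'n set"] by auto
  define g where "g = inv_into {1..?N} h"
  have gh: "g (h j) = j" if "j \<in> {1..?N}" for j
    using h that unfolding g_def by (simp add: bij_betw_def inv_into_f_f)
  have hg: "h (g i) = i" "g i \<in> {1..?N}" for i
  proof -
    have "i \<in> h ` {1..?N}" using h by (simp add: bij_betw_def)
    then show "h (g i) = i" "g i \<in> {1..?N}" unfolding g_def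
      by (auto intro: f_inv_into_f inv_into_into simp del: atLeastAtMost_iff)
  qed
  have giff: "(g i = j) = (i = h j)" if "j \<in> {1..?N}" for i j
    using gh[OF that] hg(1)[of i] by metis
  define r where "r = 1 / sqrt N"
  define a where "a = sqrt ((N + 1) / N)"
  define b where "b = (r - a) / N"
  have r2: "r\<^sup>2 = 1 / N" using Npos by (simp add: r_def power_divide)
  have a2: "a\<^sup>2 = (N + 1) / N" using Npos by (simp add: a_def)
  have Nr: "r * (N * r) = 1" using r2 Npos by (simp add: power2_eq_square field_simps)
  have hb: "a + N * b = r" using Npos by (simp add: b_def)
  have hb2: "b * (a + r) = - 1 / N"
  proof -
    have "b * (a + r) = (r\<^sup>2 - a\<^sup>2) / N" by (simp add: b_def power2_eq_square algebra_simps)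
    also have "\<dots> = - 1 / N" using Npos by (simp add: r2 a2 field_simps)
    finally show ?thesis .
  qed
  define u where "u j = (\<chi> i. if j = 0 then - r else (if g i = j then a else 0) + b)" for j :: nat
  define S where "S y = (\<Sum>i\<in>UNIV. y $ i)" for y :: "real^'n"
  have u0: "u 0 \<bullet> y = - r * S y" for y
    by (simp add: u_def S_def inner_vec_def sum_distrib_left)
  have uj: "u j \<bullet> y = a * y $ h j + b * S y" if j: "j \<in> {1..?N}" for j y
  proof -
    have "u j \<bullet> y = (\<Sum>i\<in>UNIV. (if i = h j then a * y $ i else 0) + b * y $ i)"
      using j by (auto simp: u_def inner_vec_def giff[OF j] intro!: sum.cong simp: distrib_right)
    also have "\<dots> = a * y $ h j + b * S y"
      by (simp add: sum.distrib S_def sum_distrib_left)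
    finally show ?thesis .
  qed
  have comp0: "u 0 $ i = - r" for i by (simp add: u_def)
  have compj: "u k $ h j = (if j = k then a else 0) + b" if "j \<in> {1..?N}" "k \<in> {1..?N}" for j k
    using that gh by (auto simp: u_def)
  have Su0: "S (u 0) = - N * r" by (simp add: S_def comp0 N_def)
  have Suj: "S (u j) = r" if j: "j \<in> {1..?N}" for j
  proof -
    have "S (u j) = (\<Sum>i\<in>UNIV. (if i = h j then a else 0) + b)"
      using j by (auto simp: S_def u_def giff[OF j] intro!: sum.cong)
    also have "\<dots> = a + N * b" by (simp add: sum.distrib N_def)
    finally show ?thesis using hb by simp
  qed
  have splitsum: "(\<Sum>j\<le>?N. F j) = F 0 + (\<Sum>j\<in>{1..?N}. F j)" for F :: "nat \<Rightarrow> real"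
  proof -
    have "{..?N} = insert 0 {1..?N}" by auto
    then show ?thesis by simp
  qed
  have reidx: "(\<Sum>j\<in>{1..?N}. F (h j)) = (\<Sum>i\<in>UNIV. F i)" for F :: "'n \<Rightarrow> real"
    by (rule sum.reindex_bij_betw[OF h])
  have gram: "u j \<bullet> u k = (if j = k then 1 else - 1 / N)" if "j \<le> ?N" "k \<le> ?N" for j k
  proof (cases "j = 0")
    case True
    show ?thesis
    proof (cases "k = 0")
      case True
      then show ?thesis using \<open>j = 0\<close> Npos by (simp add: u0 Su0 Nr)
    next
      case False
      then have k: "k \<in> {1..?N}" using that by auto
      show ?thesis using \<open>j = 0\<close> False by (simp add: u0 Suj[OF k] r2[symmetric] power2_eq_square)
    qed
  next
    case False
    then have j: "j \<in> {1..?N}" using that by auto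
    show ?thesis
    proof (cases "k = 0")
      case True
      have "u j \<bullet> u k = - r * (a + N * b)" using True by (simp add: uj[OF j] comp0 Su0 algebra_simps)
      then show ?thesis using True False hb by (simp add: r2[symmetric] power2_eq_square)
    next
      case kn0: False
      then have k: "k \<in> {1..?N}" using that by auto
      have "u j \<bullet> u k = a * ((if j = k then a else 0) + b) + b * r"
        by (simp add: uj[OF j] compj[OF j k] Suj[OF k])
      also have "\<dots> = (if j = k then a\<^sup>2 else 0) + b * (a + r)" by (simp add: power2_eq_square algebra_simps)
      also have "\<dots> = (if j = k then 1 else - 1 / N)" using Npos by (simp add: hb2 a2 field_simps)
      finally show ?thesis .
    qed
  qed
  have s1: "(\<Sum>j\<le>?N. u j \<bullet> y) = 0" for y
  proof -
    have "(\<Sum>j\<le>?N. u j \<bullet> y) = - r * S y + (\<Sum>j\<in>{1..?N}. a * y $ h j + b * S y)"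
      by (simp add: splitsum u0 uj)
    also have "(\<Sum>j\<in>{1..?N}. a * y $ h j + b * S y) = (\<Sum>i\<in>UNIV. a * y $ i + b * S y)"
      by (rule reidx[where F = "\<lambda>i. a * y $ i + b * S y"])
    also have "\<dots> = (a + N * b) * S y" by (simp add: sum.distrib S_def sum_distrib_left N_def algebra_simps)
    finally show ?thesis using hb by simp
  qed
  have s2: "(\<Sum>j\<le>?N. (u j \<bullet> y)\<^sup>2) = (N + 1) / N * (norm y)\<^sup>2" for y
  proof -
    have ny: "(norm y)\<^sup>2 = (\<Sum>i\<in>UNIV. (y $ i)\<^sup>2)"
      by (simp only: power2_norm_eq_inner) (simp add: inner_vec_def power2_eq_square)
    have "(\<Sum>j\<le>?N. (u j \<bullet> y)\<^sup>2) = (- r * S y)\<^sup>2 + (\<Sum>j\<in>{1..?N}. (a * y $ h j + b * S y)\<^sup>2)"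
      by (simp add: splitsum u0 uj)
    also have "(\<Sum>j\<in>{1..?N}. (a * y $ h j + b * S y)\<^sup>2) = (\<Sum>i\<in>UNIV. (a * y $ i + b * S y)\<^sup>2)"
      by (rule reidx[where F = "\<lambda>i. (a * y $ i + b * S y)\<^sup>2"])
    also have "\<dots> = a\<^sup>2 * (\<Sum>i\<in>UNIV. (y $ i)\<^sup>2) + (2 * a * b + N * b\<^sup>2) * (S y)\<^sup>2"
      by (simp add: power2_eq_square algebra_simps sum.distrib sum_distrib_left S_def N_def)
    also have "2 * a * b + N * b\<^sup>2 = b * (a + (a + N * b))" by (simp add: power2_eq_square algebra_simps)
    also have "\<dots> = - 1 / N" using hb hb2 by simp
    finally have E: "(\<Sum>j\<le>?N. (u j \<bullet> y)\<^sup>2) = (- r * S y)\<^sup>2 + (a\<^sup>2 * (\<Sum>i\<in>UNIV. (y $ i)\<^sup>2) + - 1 / N * (S y)\<^sup>2)" .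
    then show ?thesis by (simp add: ny a2 power_mult_distrib r2)
  qed
  show ?thesis using gram s1 s2 unfolding N_def by (intro exI[of _ u]) auto
qed

lemma upper_one:
  "\<exists>x :: nat \<Rightarrow> real^'n. admissible_nodes x \<and> interp_norm x \<le> sqrt (real CARD('n) + 1)"
proof -
  let ?N = "CARD('n)"
  define N where "N = real ?N"
  have Npos: "N > 0" unfolding N_def by simp
  obtain u :: "nat \<Rightarrow> real^'n" where gram: "\<forall>j\<le>?N. \<forall>k\<le>?N. u j \<bullet> u k = (if j = k then 1 else - 1 / N)"
    and s1: "\<forall>y. (\<Sum>j\<le>?N. u j \<bullet> y) = 0"
    and s2: "\<forall>y. (\<Sum>j\<le>?N. (u j \<bullet> y)\<^sup>2) = (N + 1) / N * (norm y)\<^sup>2"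
    using regular_simplex unfolding N_def by blast
  define A where "A j = (N / (N + 1)) *\<^sub>R u j" for j
  define Bc where "Bc j = 1 / (N + 1)" for j :: nat
  have AB: "\<forall>j\<le>?N. \<forall>k\<le>?N. A j \<bullet> u k + Bc j = (if j = k then 1 else 0)"
    using gram Npos by (auto simp: A_def Bc_def field_simps)
  have nu: "norm (u j) = 1" if "j \<le> ?N" for j
  proof -
    have "(norm (u j))\<^sup>2 = 1" using gram that by (simp add: power2_norm_eq_inner)
    then show ?thesis by (smt (verit) norm_ge_zero power2_eq_1_iff)
  qed
  have adm: "admissible_nodes u" by (rule bary_admissible[OF _ AB]) (use nu in auto)
  have ip: "interp u f = (\<lambda>y. \<Sum>j\<le>?N. f (u j) * (A j \<bullet> y + Bc j))" for f
    by (rule interp_bary[OF adm AB])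
  have lam: "(\<Sum>j\<le>?N. \<bar>A j \<bullet> y + Bc j\<bar>) \<le> sqrt (N + 1)" if y: "norm y \<le> 1" for y
  proof -
    define c where "c = N / (N + 1)"
    define k where "k = 2 * c / (N + 1)"
    define d where "d = 1 / (N + 1)\<^sup>2"
    have "(\<Sum>j\<le>?N. (A j \<bullet> y + Bc j)\<^sup>2)
        = (\<Sum>j\<le>?N. c\<^sup>2 * (u j \<bullet> y)\<^sup>2 + k * (u j \<bullet> y) + d)"
      by (intro sum.cong refl) (simp add: A_def Bc_def c_def k_def d_def power2_eq_square algebra_simps)
    also have "\<dots> = c\<^sup>2 * (\<Sum>j\<le>?N. (u j \<bullet> y)\<^sup>2) + k * (\<Sum>j\<le>?N. u j \<bullet> y) + (N + 1) * d"
      by (simp add: sum.distrib sum_distrib_left N_def)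
    also have "\<dots> = c\<^sup>2 * ((N + 1) / N * (norm y)\<^sup>2) + (N + 1) * d"
      using s1 s2 by simp
    also have "\<dots> = N / (N + 1) * (norm y)\<^sup>2 + 1 / (N + 1)"
    proof -
      have N1: "N + 1 \<noteq> 0" using Npos by simp
      have "c\<^sup>2 * ((N + 1) / N) = N / (N + 1)" unfolding c_def using Npos N1
        by (simp add: power2_eq_square divide_simps)
      moreover have "(N + 1) * d = 1 / (N + 1)" unfolding d_def using N1 by (simp add: power2_eq_square)
      ultimately show ?thesis by (metis mult.assoc)
    qed
    also have "\<dots> \<le> N / (N + 1) * 1 + 1 / (N + 1)"
      using y Npos by (intro add_right_mono mult_left_mono) (auto simp: power_le_one)
    also have "\<dots> = 1" using Npos by (simp add: field_simps)
    finally have sq: "(\<Sum>j\<le>?N. (A j \<bullet> y + Bc j)\<^sup>2) \<le> 1" .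
    have "(\<Sum>j\<le>?N. \<bar>A j \<bullet> y + Bc j\<bar>)\<^sup>2 \<le> (\<Sum>j\<le>?N. \<bar>A j \<bullet> y + Bc j\<bar>\<^sup>2) * card {..?N}"
      by (rule sum_squared_le_sum_of_squares)
    also have "\<dots> \<le> 1 * (N + 1)" using sq by (intro mult_mono) (auto simp: N_def)
    finally show ?thesis by (simp add: real_le_rsqrt)
  qed
  have "interp_norm u \<le> sqrt (N + 1)"
    unfolding interp_norm_def
  proof (rule cSup_least)
    show "{\<bar>interp u f y\<bar> | f y. continuous_on (cball (0::real^'n) 1) f \<and> (\<forall>z\<in>cball 0 1. \<bar>f z\<bar> \<le> 1) \<and> y \<in> cball 0 1} \<noteq> {}"
      by (rule ex_in_conv[THEN iffD1], rule exI[of _ "\<bar>interp u (\<lambda>_. 0) 0\<bar>"]) (auto intro!: exI[of _ "\<lambda>_. 0"] exI[of _ 0])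
  next
    fix t assume "t \<in> {\<bar>interp u f y\<bar> | f y. continuous_on (cball (0::real^'n) 1) f \<and> (\<forall>z\<in>cball 0 1. \<bar>f z\<bar> \<le> 1) \<and> y \<in> cball 0 1}"
    then obtain f y where t: "t = \<bar>interp u f y\<bar>" and f: "\<forall>z\<in>cball 0 1. \<bar>f z\<bar> \<le> 1" and y: "y \<in> cball (0::real^'n) 1"
      by blast
    have "t \<le> (\<Sum>j\<le>?N. \<bar>f (u j) * (A j \<bullet> y + Bc j)\<bar>)" unfolding t ip by (rule sum_abs)
    also have "\<dots> \<le> (\<Sum>j\<le>?N. \<bar>A j \<bullet> y + Bc j\<bar>)"
    proof (rule sum_mono)
      fix j assume j: "j \<in> {..?N}"
      have "\<bar>f (u j)\<bar> \<le> 1" using f nu j by auto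
      then show "\<bar>f (u j) * (A j \<bullet> y + Bc j)\<bar> \<le> \<bar>A j \<bullet> y + Bc j\<bar>"
        by (simp add: abs_mult mult_left_le_one_le)
    qed
    also have "\<dots> \<le> sqrt (N + 1)" using lam y by auto
    finally show "t \<le> sqrt (N + 1)" .
  qed
  then show ?thesis using adm unfolding N_def by blast
qed

lemma const_bound: "root 3 pi / (sqrt (12 * exp 1) * root 6 3) < 1 / 2"
proof -
  have "root 3 pi < root 3 8" by (rule real_root_less_mono) (use pi_less_4 in auto)
  also have "root 3 8 = 2"
    by (rule real_root_pos_unique) auto
  finally have r: "root 3 pi < 2" .
  have "exp 1 \<ge> (2::real)" using exp_ge_add_one_self[of 1] by simp
  then have s: "4 < sqrt (12 * exp 1)" by (intro real_less_rsqrt) simp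
  have t: "1 \<le> root 6 3" by simp
  have "4 \<le> sqrt (12 * exp 1) * root 6 3" using mult_mono[of 4 "sqrt (12 * exp 1)" 1 "root 6 3"] s t by simp
  moreover have "0 \<le> root 3 pi" by simp
  ultimately have "root 3 pi / (sqrt (12 * exp 1) * root 6 3) \<le> root 3 pi / 4"
    by (intro divide_left_mono) auto
  also have "\<dots> < 1 / 2" using r by simp
  finally show ?thesis .
qed

theorem theorem11p4:
  shows "root 3 pi / (sqrt (12 * exp 1) * root 6 3) * sqrt (real CARD('n))
           < theta_ball TYPE('n::finite)
         \<and> theta_ball TYPE('n::finite) \<le> sqrt (real CARD('n) + 1)"
proof -
  let ?T = "{interp_norm (x :: nat \<Rightarrow> real^'n) | x. admissible_nodes x}"
  obtain u :: "nat \<Rightarrow> real^'n" where u: "admissible_nodes u" "interp_norm u \<le> sqrt (real CARD('n) + 1)"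
    using upper_one by blast
  have ne: "?T \<noteq> {}" using u by blast
  have lb: "\<forall>t\<in>?T. sqrt (real CARD('n) + 1) / 2 \<le> t" using lower_one by blast
  have "sqrt (real CARD('n) + 1) / 2 \<le> Inf ?T" by (rule cInf_greatest[OF ne]) (use lb in blast)
  moreover have "root 3 pi / (sqrt (12 * exp 1) * root 6 3) * sqrt (real CARD('n)) < sqrt (real CARD('n) + 1) / 2"
  proof -
    have p: "0 < sqrt (real CARD('n))" by simp
    have "root 3 pi / (sqrt (12 * exp 1) * root 6 3) * sqrt (real CARD('n)) < 1 / 2 * sqrt (real CARD('n))"
      using const_bound p by (intro mult_strict_right_mono) auto
    also have "\<dots> \<le> sqrt (real CARD('n) + 1) / 2" by simp
    finally show ?thesis .
  qed
  moreover have "Inf ?T \<le> interp_norm u"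
    by (rule cInf_lower) (use u lb in \<open>auto intro!: bdd_belowI[of _ "sqrt (real CARD('n) + 1) / 2"]\<close>)
  ultimately show ?thesis using u unfolding theta_ball_def by linarith
qed

end
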